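(* The function $\kappa\mapsto\Gamma(\kappa,0)$ does not vanish on $(0,\infty)\setminus I_*$, where $I_*:=(0.380337,\,0.380338)$.
   Context: For each $\kappa>0$, $\Gamma(\kappa,0):=\lim_{\ell\to0}\Gamma_\ell$ is the value at $\ell=0$ of the analytic extension of $\ell\mapsto\Gamma_\ell$, where $\Gamma_\ell$ (small $\ell\ne0$) is defined as follows. Set $T:=2\pi/\kappa$, $\mu_0:=\kappa/\tanh(\kappa)$, $H^s_{\rm per}:=H^s(\mathbb R/T\mathbb Z)$. For a sufficiently regular $\eta$ with $1+\eta>0$, $G[1+\eta]\psi:=(\partial_z\phi-\nabla\eta\cdot\nabla\phi)|_{z=1+\eta}$, $\nabla=(\partial_x,\partial_y)$, where $\phi$ is the bounded solution of $\Delta_{x,y,z}\phi=0$ in $\{0<z<1+\eta(x,y)\}$, $\partial_z\phi(\cdot,\cdot,0)=0$, $\phi|_{z=1+\eta}=\psi$. Let $\varepsilon\mapsto(\underline\eta_\varepsilon,\underline\psi_\varepsilon,\underline\mu_\varepsilon)$ be the analytic family of small-amplitude $T$-periodic Stokes waves: the unique solution of $\underline\eta'+G[1+\underline\eta]\underline\psi=0$, $\underline\psi'-\underline\mu\,\underline\eta=\frac12(\underline\psi')^2-\frac12\frac{(G[1+\underline\eta]\underline\psi+\underline\eta'\underline\psi')^2}{1+(\underline\eta')^2}$ with $\|(\underline\eta,\underline\psi)-\varepsilon(\sinh(\kappa)\cos(\kappa\cdot),\cosh(\kappa)\sin(\kappa\cdot))\|_{H^{s_0}_{\rm per}}+|\underline\mu-\mu_0|\le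 K_0\varepsilon^2$. Set $\underline B_\varepsilon:=\frac{\underline\psi_\varepsilon'-1}{1+(\underline\eta_\varepsilon')^2}\underline\eta_\varepsilon'$, $\underline V_\varepsilon:=\underline\psi'_\varepsilon-\underline B_\varepsilon\underline\eta_\varepsilon'$, $\underline a_\varepsilon:=\underline\mu_\varepsilon-\mu_0-(1-\underline V_\varepsilon)\underline B_\varepsilon'$, $G_{\ell,\xi}[1+\underline\eta_\varepsilon]\psi(x):=e^{-i\xi x-i\ell y}G[1+\underline\eta_\varepsilon]\big((x',y')\mapsto e^{i\xi x'+i\ell y'}\psi(x')\big)(x,y)$ and $L^\varepsilon_{\ell,\xi}:=\begin{pmatrix}(\partial_x+i\xi)((1-\underline V_\varepsilon)\,\cdot\,) & G_{\ell,\xi}[1+\underline\eta_\varepsilon]\\ -(\mu_0+\underline a_\varepsilon) & (1-\underline V_\varepsilon)(\partial_x+i\xi)\end{pmatrix}$ on $L^2_{\rm per}\times H^{1/2}_{\rm per}$. Let $F$ be the odd analytic function with $F(r)=\sqrt{r\tanh r}$ for $r\ge0$, $|n\kappa|_{\ell,\xi}:=\sqrt{(n\kappa+\xi)^2+\ell^2}$, $\lambda^\pm_{n,\ell,\xi}:=i(n\kappa+\xi\pm\sqrt{\mu_0}F(|n\kappa|_{\ell,\xi}))$, and $\xi_+$ the odd analytic function near $0$ with $\xi_+'(0)>0$ and $\lambda^-_{1,\ell,\xi_+(\ell)}=\lambda^+_{-1,\ell,\xi_+(\ell)}=:i\sigma_+(\ell)$. For small $\ell\ne0$ and $|(\varepsilon,\xi-\xi_+(\ell))|\le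 c_0'|\ell|$, $L^\varepsilon_{\ell,\xi}$ has exactly two eigenvalues in $B(i\sigma_+(\ell),c_0|\ell|)$ (for suitable $c_0,c_0'>0$); let $\Pi_{\ell,\xi}(\varepsilon)$ be the associated Riesz projector and $\mathcal U_{\ell,\xi}(\varepsilon)$ the solution of $\partial_\varepsilon\mathcal U_{\ell,\xi}=[\partial_\varepsilon\Pi_{\ell,\xi},\Pi_{\ell,\xi}]\mathcal U_{\ell,\xi}$, $\mathcal U_{\ell,\xi}(0)=I$. Set $\alpha_\pm(\ell,\xi):=F(|\mp\kappa|_{\ell,\xi})/\sqrt{\mu_0}$, $q_-^0(\ell,\xi,x):=e^{i\kappa x}(i\alpha_-(\ell,\xi),1)^T$, $q_+^0(\ell,\xi,x):=e^{-i\kappa x}(-i\alpha_+(\ell,\xi),1)^T$, $q_\pm^\varepsilon:=\mathcal U_{\ell,\xi}(\varepsilon)q_\pm^0$, $J:=\begin{pmatrix}0&-1\\1&0\end{pmatrix}$, $A^\varepsilon_{\ell,\xi}:=J^{-1}L^\varepsilon_{\ell,\xi}$, $\langle f,g\rangle:=\frac1T\int_0^T\overline{f(x)}\cdot g(x)\,dx$, $a(\ell,\xi,\varepsilon):=\langle q_+^\varepsilon,A^\varepsilon_{\ell,\xi}q_-^\varepsilon\rangle$, $\Gamma_\ell:=\frac12\partial_\varepsilon^2a(\ell,\xi_+(\ell),0)$. (Explicitly, with $s=\sinh\kappa$, $c=\cosh\kappa$, $\Gamma(\kappa,0)=\frac{\kappa^3}{8csD(\kappa)}\big(\kappa^3(64s^8+144s^6+144s^4+94s^2+9)-\kappa^2cs(24s^4+40s^2+27)+\kappa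 s^2(1+s^2)(48s^6+40s^4+2s^2+27)-cs^3(1+s^2)(40s^4+56s^2+9)\big)$ with $D(\kappa)=\kappa^3(8s^4+10s^2+1)-3\kappa^2cs+3\kappa s^2(1+s^2)(2s^2+1)-cs^3(1+s^2)$.) *)

theory Defs
  imports Complex_Main
begin

definition D_den :: "real \<Rightarrow> real" where
  "D_den k = (let s = sinh k; c = cosh k in
     k^3 * (8*s^4 + 10*s^2 + 1) - 3*k^2*c*s + 3*k*s^2*(1+s^2)*(2*s^2+1) - c*s^3*(1+s^2))"

definition Gamma0 :: "real \<Rightarrow> real" where
  "Gamma0 k = (let s = sinh k; c = cosh k in
     k^3 / (8*c*s*D_den k) *
     (k^3 * (64*s^8 + 144*s^6 + 144*s^4 + 94*s^2 + 9)
      - k^2*c*s*(24*s^4 + 40*s^2 + 27)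
      + k*s^2*(1+s^2)*(48*s^6 + 40*s^4 + 2*s^2 + 27)
      - c*s^3*(1+s^2)*(40*s^4 + 56*s^2 + 9)))"

end

theory Submission
  imports Defs
begin

definition bs :: "nat \<Rightarrow> real \<Rightarrow> real \<Rightarrow> real" where
  "bs p m k = k^p * (exp (m*k) - (-1)^p * exp (-(m*k)))"
definition bc :: "nat \<Rightarrow> real \<Rightarrow> nat \<Rightarrow> real" where
  "bc p m n = (if p \<le> n then (1 - (-1)^n) * m^(n-p) / fact (n-p) else 0)"

lemma bs_sums: "(\<lambda>n. bc p m n * k^n) sums bs p m k"
proof -
  have h1: "(\<lambda>j. (m*k)^j / fact j) sums exp (m*k)"
    using exp_converges[of "m*k"] by (simp add: divide_inverse mult.commute)
  have h2: "(\<lambda>j. (-(m*k))^j / fact j) sums exp (-(m*k))"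
    using exp_converges[of "-(m*k)"] by (simp add: divide_inverse mult.commute)
  have h3: "(\<lambda>j. k^p * ((m*k)^j / fact j - (-1)^p * ((-(m*k))^j / fact j))) sums bs p m k"
    unfolding bs_def by (rule sums_mult, rule sums_diff, rule h1, rule sums_mult, rule h2)
  have eq: "(\<lambda>j. k^p * ((m*k)^j / fact j - (-1)^p * ((-(m*k))^j / fact j))) = (\<lambda>j. bc p m (j+p) * k^(j+p))"
  proof (rule ext)
    fix j
    have e0: "(-(m*k)) = (-1)*(m*(k::real))" by simp
    have e1: "(-(m*k))^j = (-1)^j * (m^j * k^j)" unfolding e0 power_mult_distrib by (rule refl)
    have e2: "bc p m (j+p) = (1 - (-1)^j * (-1)^p) * m^j / fact j" by (simp add: bc_def power_add)
    have e3: "\<And>Q A B F s t::real. Q * (A * B / F - s * (t * (A * B) / F)) = (1 - t * s) * A / F * (B * Q)"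
      by (simp add: algebra_simps diff_divide_distrib)
    show "k^p * ((m*k)^j / fact j - (-1)^p * ((-(m*k))^j / fact j)) = bc p m (j+p) * k^(j+p)"
      unfolding e1 e2 power_mult_distrib power_add by (rule e3)
  qed
  have z: "(\<Sum>i<p. bc p m i * k^i) = 0" by (simp add: bc_def)
  have "(\<lambda>j. bc p m (j+p) * k^(j+p)) sums bs p m k" using h3 eq by simp
  then have "(\<lambda>n. bc p m n * k^n) sums (bs p m k + (\<Sum>i<p. bc p m i * k^i))"
    by (rule iffD1[OF sums_iff_shift])
  then show ?thesis using z by simp
qed

type_synonym ent = "real \<times> real \<times> real \<times> real \<times> real"

definition tf :: "ent \<Rightarrow> real \<Rightarrow> real" where
  "tf e k = (case e of (m,c0,c1,c2,c3) \<Rightarrow> c0*bs 0 m k + c1*bs 1 m k + c2*bs 2 m k + c3*bs 3 m k)"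
definition tc :: "ent \<Rightarrow> nat \<Rightarrow> real" where
  "tc e n = (case e of (m,c0,c1,c2,c3) \<Rightarrow> c0*bc 0 m n + c1*bc 1 m n + c2*bc 2 m n + c3*bc 3 m n)"

lemma tf_sums: "(\<lambda>n. tc e n * k^n) sums tf e k"
proof -
  obtain m c0 c1 c2 c3 where e: "e = (m,c0,c1,c2,c3)" by (cases e) auto
  have "(\<lambda>n. c0*(bc 0 m n * k^n) + c1*(bc 1 m n * k^n) + c2*(bc 2 m n * k^n) + c3*(bc 3 m n * k^n))
     sums (c0*bs 0 m k + c1*bs 1 m k + c2*bs 2 m k + c3*bs 3 m k)"
    by (intro sums_add sums_mult bs_sums)
  then show ?thesis unfolding e tf_def tc_def by (simp add: algebra_simps)
qed

definition FL :: "ent list \<Rightarrow> real \<Rightarrow> real" where "FL L k = (\<Sum>e\<leftarrow>L. tf e k)"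
definition CL :: "ent list \<Rightarrow> nat \<Rightarrow> real" where "CL L n = (\<Sum>e\<leftarrow>L. tc e n)"

lemma FL_sums: "(\<lambda>n. CL L n * k^n) sums FL L k"
proof (induction L)
  case Nil
  then show ?case by (simp add: FL_def CL_def)
next
  case (Cons e L)
  have "(\<lambda>n. tc e n * k^n + CL L n * k^n) sums (tf e k + FL L k)"
    by (rule sums_add[OF tf_sums Cons.IH])
  then show ?case by (simp add: FL_def CL_def algebra_simps)
qed

definition Qp :: "ent \<Rightarrow> nat \<Rightarrow> real" where
  "Qp e n = (case e of (m,c0,c1,c2,c3) \<Rightarrow> m^(n-3) * (c0*m^3 + c1*m^2*real n + c2*m*real n*(real n - 1) + c3*real n*(real n - 1)*(real n - 2)))"

lemma alg0:
  fixes a b c F s A m c0 c1 c2 c3 :: real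
  assumes "a > 0" "b > 0" "c > 0" "F > 0"
  shows "c0*(s*(A*m^3)/(c*b*a*F)) + c1*(s*(A*m^2)/(b*a*F)) + c2*(s*(A*m)/(a*F)) + c3*(s*A/F)
    = s/(c*b*a*F) * (A*(c0*m^3 + c1*m^2*c + c2*m*c*b + c3*c*b*a))"
  using assms by (simp add: field_simps)

lemma alg1:
  fixes x F s A m c0 c1 c2 c3 :: real
  assumes "x \<ge> 0" "F > 0"
  shows "c0*(s*(A*m^3)/((x+3)*(x+2)*(x+1)*F)) + c1*(s*(A*m^2)/((x+2)*(x+1)*F)) + c2*(s*(A*m)/((x+1)*F)) + c3*(s*A/F)
    = s/((x+3)*(x+2)*(x+1)*F) * (A*(c0*m^3 + c1*m^2*(x+3) + c2*m*(x+3)*(x+2) + c3*(x+3)*(x+2)*(x+1)))"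
  by (rule alg0) (use assms in auto)

lemma tc_formula: assumes "3 \<le> n" shows "tc e n = (1 - (-1)^n) / fact n * Qp e n"
proof -
  obtain m c0 c1 c2 c3 where e: "e = (m,c0,c1,c2,c3)" by (cases e) auto
  obtain j where j: "n = j + 3" using assms by (metis le_add_diff_inverse2)
  define s :: real where "s = 1 - (-1)^n"
  have f1: "fact (j+1) = (real j + 1) * (fact j :: real)" by (simp add: fact_Suc[of j, simplified] algebra_simps)
  have f2: "fact (j+2) = (real j + 2) * (real j + 1) * (fact j :: real)"
    using fact_Suc[of "j+1"] f1 by (simp add: algebra_simps)
  have f3: "fact (j+3) = (real j + 3) * (real j + 2) * (real j + 1) * (fact j :: real)"
  proof -
    have "(fact (j+3)::real) = fact (Suc (j+2))" by (rule arg_cong[where f=fact]) simp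
    also have "\<dots> = (real j + 3) * fact (j+2)" by (simp add: algebra_simps)
    finally show ?thesis using f2 by (simp add: algebra_simps)
  qed
  have b0: "bc 0 m n = s * (m^j*m^3) / fact (j+3)" by (simp add: bc_def s_def j power_add)
  have b1: "bc 1 m n = s * (m^j*m^2) / fact (j+2)" by (simp add: bc_def s_def j power_add power2_eq_square)
  have b2: "bc 2 m n = s * (m^j*m) / fact (j+1)" by (simp add: bc_def s_def j power_add)
  have b3: "bc 3 m n = s * m^j / fact j" by (simp add: bc_def s_def j)
  have q: "Qp e n = m^j * (c0*m^3 + c1*m^2*(real j + 3) + c2*m*(real j + 3)*(real j + 2) + c3*(real j+3)*(real j+2)*(real j+1))"
    by (simp add: Qp_def e j algebra_simps)
  have fj: "(fact j :: real) > 0" by simp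
  have fn: "(fact n::real) = fact (j+3)" by (simp add: j)
  have p1: "real j + 1 > 0" "real j + 2 > 0" "real j + 3 > 0" by auto
  show ?thesis unfolding tc_def e prod.case b0 b1 b2 b3 s_def[symmetric] fn f1 f2 f3
    unfolding e[symmetric] q
    by (rule alg1) (simp_all add: fj)
qed

lemma CL_nonneg: assumes "3 \<le> n" "\<And>e. e \<in> set L \<Longrightarrow> Qp e n \<ge> 0" shows "CL L n \<ge> 0"
proof -
  have s: "1 - (-1)^n \<ge> (0::real)" by (cases "even n") auto
  have "CL L n = (\<Sum>e\<leftarrow>L. (1 - (-1)^n) / fact n * Qp e n)"
    unfolding CL_def using tc_formula[OF assms(1)] by (metis (no_types, lifting) map_eq_conv)
  also have "\<dots> \<ge> 0" using assms(2) s by (intro sum_list_nonneg) auto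
  finally show ?thesis .
qed

definition Num :: "real \<Rightarrow> real" where
  "Num k = (let s = sinh k; c = cosh k in
     (k^3 * (64*s^8 + 144*s^6 + 144*s^4 + 94*s^2 + 9)
      - k^2*c*s*(24*s^4 + 40*s^2 + 27)
      + k*s^2*(1+s^2)*(48*s^6 + 40*s^4 + 2*s^2 + 27)
      - c*s^3*(1+s^2)*(40*s^4 + 56*s^2 + 9)))"

lemma Gamma0_Num: "Gamma0 k = k^3 / (8*cosh k*sinh k*D_den k) * Num k"
  unfolding Gamma0_def Num_def Let_def by simp

definition LN :: "ent list" where
  "LN = [(0,0,-7/4,0,-23/4), (2,-11/32,-1/16,-29/8,29/4), (4,1/8,15/8,-1,5/2),
         (6,23/128,1/64,-3/8,1/4), (8,-1/16,-1/8,0,1/4), (10,-5/128,3/64,0,0)]"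
definition LD :: "ent list" where
  "LD = [(0,0,0,0,-1/2),(2,3/64,-3/32,-3/4,1/2),(4,0,0,0,1/2),(6,-1/64,3/32,0,0)]"

lemma bsE: "bs 0 m k = 2*sinh(m*k)" "bs 1 m k = 2*k*cosh(m*k)" "bs (Suc 0) m k = 2*k*cosh(m*k)" "bs 2 m k = 2*k^2*sinh(m*k)" "bs 3 m k = 2*k^3*cosh(m*k)"
  by (simp_all add: bs_def sinh_def cosh_def field_simps)

lemma cs2: "cosh (k::real) ^ 2 = 1 + sinh k ^ 2" by (simp add: cosh_square_eq)

lemma hyp2: "cosh (2*k) = (1 + 2*sinh k^2)" "sinh (2*(k::real)) = cosh k * (2*sinh k)"
  by (simp_all add: cosh_double sinh_double cs2)

lemma hyp4: "cosh (4*k) = (1 + 8*sinh k^2 + 8*sinh k^4)" "sinh (4*(k::real)) = cosh k * (4*sinh k + 8*sinh k^3)"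
proof -
  have e: "4*k = 2*k + 2*k" by simp
  have c: "cosh k * cosh k = 1 + sinh k ^ 2" using cs2[of k] by (simp add: power2_eq_square)
  show "cosh (4*k) = (1 + 8*sinh k^2 + 8*sinh k^4)" unfolding e cosh_add hyp2
    using c by algebra
  show "sinh (4*k) = cosh k * (4*sinh k + 8*sinh k^3)" unfolding e sinh_add hyp2
    by algebra
qed

lemma hyp6: "cosh (6*k) = (1 + 18*sinh k^2 + 48*sinh k^4 + 32*sinh k^6)" "sinh (6*(k::real)) = cosh k * (6*sinh k + 32*sinh k^3 + 32*sinh k^5)"
proof -
  have e: "6*k = 4*k + 2*k" by simp
  have c: "cosh k * cosh k = 1 + sinh k ^ 2" using cs2[of k] by (simp add: power2_eq_square)
  show "cosh (6*k) = (1 + 18*sinh k^2 + 48*sinh k^4 + 32*sinh k^6)" unfolding e cosh_add hyp4 hyp2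
    using c by algebra
  show "sinh (6*k) = cosh k * (6*sinh k + 32*sinh k^3 + 32*sinh k^5)" unfolding e sinh_add hyp4 hyp2
    by algebra
qed

lemma hyp8: "cosh (8*k) = (1 + 32*sinh k^2 + 160*sinh k^4 + 256*sinh k^6 + 128*sinh k^8)" "sinh (8*(k::real)) = cosh k * (8*sinh k + 80*sinh k^3 + 192*sinh k^5 + 128*sinh k^7)"
proof -
  have e: "8*k = 6*k + 2*k" by simp
  have c: "cosh k * cosh k = 1 + sinh k ^ 2" using cs2[of k] by (simp add: power2_eq_square)
  show "cosh (8*k) = (1 + 32*sinh k^2 + 160*sinh k^4 + 256*sinh k^6 + 128*sinh k^8)" unfolding e cosh_add hyp6 hyp2
    using c by algebra
  show "sinh (8*k) = cosh k * (8*sinh k + 80*sinh k^3 + 192*sinh k^5 + 128*sinh k^7)" unfolding e sinh_add hyp6 hyp2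
    by algebra
qed

lemma hyp10: "cosh (10*k) = (1 + 50*sinh k^2 + 400*sinh k^4 + 1120*sinh k^6 + 1280*sinh k^8 + 512*sinh k^10)" "sinh (10*(k::real)) = cosh k * (10*sinh k + 160*sinh k^3 + 672*sinh k^5 + 1024*sinh k^7 + 512*sinh k^9)"
proof -
  have e: "10*k = 8*k + 2*k" by simp
  have c: "cosh k * cosh k = 1 + sinh k ^ 2" using cs2[of k] by (simp add: power2_eq_square)
  show "cosh (10*k) = (1 + 50*sinh k^2 + 400*sinh k^4 + 1120*sinh k^6 + 1280*sinh k^8 + 512*sinh k^10)" unfolding e cosh_add hyp8 hyp2
    using c by algebra
  show "sinh (10*k) = cosh k * (10*sinh k + 160*sinh k^3 + 672*sinh k^5 + 1024*sinh k^7 + 512*sinh k^9)" unfolding e sinh_add hyp8 hyp2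
    by algebra
qed

lemma gen4: "\<And>A B C D k c s::real. k^3*A + k^2*(-(c*s*B)) + k*C + -D = k^3*A - k^2*c*s*B + k*C - D"
  by (simp add: algebra_simps)

lemma D_lin: "FL LD k = k^3*(2*(-1/2 + 1/2*cosh(2*k) + 1/2*cosh(4*k))) + k^2*(2*(-3/4*sinh(2*k)))
   + k*(2*(-3/32*cosh(2*k) + 3/32*cosh(6*k))) + 2*(3/64*sinh(2*k) - 1/64*sinh(6*k))"
  unfolding FL_def LD_def tf_def by (simp add: bsE algebra_simps)

lemma D_FL: "D_den k = FL LD k"
proof -
  let ?s = "sinh k" and ?c = "cosh k"
  have e3: "2*(-1/2 + 1/2*cosh(2*k) + 1/2*cosh(4*k)) = 8*?s^4 + 10*?s^2 + 1"
    unfolding hyp2 hyp4 by algebra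
  have e2: "2*(-3/4*sinh(2*k)) = -(?c*?s*3)"
    unfolding hyp2 by algebra
  have e1: "2*(-3/32*cosh(2*k) + 3/32*cosh(6*k)) = 3*?s^2*(1+?s^2)*(2*?s^2+1)"
    unfolding hyp2 hyp6 by algebra
  have e0: "2*(3/64*sinh(2*k) - 1/64*sinh(6*k)) = -(?c*?s^3*(1+?s^2))"
    unfolding hyp2 hyp6 by algebra
  have "D_den k = k^3*(8*?s^4 + 10*?s^2 + 1) - k^2*?c*?s*3 + k*(3*?s^2*(1+?s^2)*(2*?s^2+1)) - ?c*?s^3*(1+?s^2)"
    unfolding D_den_def Let_def by (simp add: algebra_simps)
  also have "\<dots> = FL LD k" unfolding D_lin e3 e2 e1 e0 gen4 ..
  finally show ?thesis .
qed

lemma N_lin: "FL LN k = k^3*(2*(-23/4 + 29/4*cosh(2*k) + 5/2*cosh(4*k) + 1/4*cosh(6*k) + 1/4*cosh(8*k)))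
   + k^2*(2*(-29/8*sinh(2*k) - sinh(4*k) - 3/8*sinh(6*k)))
   + k*(2*(-7/4 - 1/16*cosh(2*k) + 15/8*cosh(4*k) + 1/64*cosh(6*k) - 1/8*cosh(8*k) + 3/64*cosh(10*k)))
   + 2*(-11/32*sinh(2*k) + 1/8*sinh(4*k) + 23/128*sinh(6*k) - 1/16*sinh(8*k) - 5/128*sinh(10*k))"
  unfolding FL_def LN_def tf_def by (simp add: bsE algebra_simps)

lemma Num_FL: "Num k = FL LN k"
proof -
  let ?s = "sinh k" and ?c = "cosh k"
  have e3: "2*(-23/4 + 29/4*cosh(2*k) + 5/2*cosh(4*k) + 1/4*cosh(6*k) + 1/4*cosh(8*k)) = 64*?s^8 + 144*?s^6 + 144*?s^4 + 94*?s^2 + 9"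
    unfolding hyp2 hyp4 hyp6 hyp8 by algebra
  have e2: "2*(-29/8*sinh(2*k) - sinh(4*k) - 3/8*sinh(6*k)) = -(?c*?s*(24*?s^4 + 40*?s^2 + 27))"
    unfolding hyp2 hyp4 hyp6 by algebra
  have e1: "2*(-7/4 - 1/16*cosh(2*k) + 15/8*cosh(4*k) + 1/64*cosh(6*k) - 1/8*cosh(8*k) + 3/64*cosh(10*k)) = ?s^2*(1+?s^2)*(48*?s^6 + 40*?s^4 + 2*?s^2 + 27)"
    unfolding hyp2 hyp4 hyp6 hyp8 hyp10 by algebra
  have e0: "2*(-11/32*sinh(2*k) + 1/8*sinh(4*k) + 23/128*sinh(6*k) - 1/16*sinh(8*k) - 5/128*sinh(10*k)) = -(?c*?s^3*(1+?s^2)*(40*?s^4 + 56*?s^2 + 9))"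
    unfolding hyp2 hyp4 hyp6 hyp8 hyp10 by algebra
  have "Num k = k^3*(64*?s^8 + 144*?s^6 + 144*?s^4 + 94*?s^2 + 9) - k^2*?c*?s*(24*?s^4 + 40*?s^2 + 27) + k*(?s^2*(1+?s^2)*(48*?s^6 + 40*?s^4 + 2*?s^2 + 27)) - ?c*?s^3*(1+?s^2)*(40*?s^4 + 56*?s^2 + 9)"
    unfolding Num_def Let_def by (simp add: mult.assoc)
  also have "\<dots> = FL LN k" unfolding N_lin e3 e2 e1 e0 gen4 ..
  finally show ?thesis .
qed

fun hor :: "real list \<Rightarrow> real \<Rightarrow> real" where
  "hor [] x = 0"
| "hor (a#l) x = a + x * hor l x"

lemma Qp_gen:
  fixes m c0 c1 c2 c3 t a dA dB dC dD :: real
  assumes "m \<ge> 0" "real n = t + a" "t \<ge> 0"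
    "c0*m^3 + c1*m^2*(t+a) + c2*m*(t+a)*(t+a-1) + c3*(t+a)*(t+a-1)*(t+a-2) = dA + dB*t + dC*t^2 + dD*t^3"
    "dA \<ge> 0" "dB \<ge> 0" "dC \<ge> 0" "dD \<ge> 0"
  shows "0 \<le> Qp (m,c0,c1,c2,c3) n"
proof -
  have "Qp (m,c0,c1,c2,c3) n = m^(n-3) * (dA + dB*t + dC*t^2 + dD*t^3)"
    using assms(2,4) by (simp add: Qp_def)
  also have "\<dots> \<ge> 0" using assms by (intro mult_nonneg_nonneg add_nonneg_nonneg) auto
  finally show ?thesis .
qed

lemma QN0: "11 \<le> n \<Longrightarrow> 0 \<le> Qp (0, 0, -(7/4), 0, -(23/4)) n" by (simp add: Qp_def power_0_left)

lemma QN2: "11 \<le> n \<Longrightarrow> 0 \<le> Qp (2, -(11/32), -(1/16), -(29/8), 29/4) n"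
  by (rule Qp_gen[where t="real n - 11" and a=11 and dA="12749/2" and dB="8061/4" and dC="841/4" and dD="29/4"])
     (auto simp: field_simps power2_eq_square power3_eq_cube)

lemma QN4: "11 \<le> n \<Longrightarrow> 0 \<le> Qp (4, 1/8, 15/8, -1, 5/2) n"
  by (rule Qp_gen[where t="real n - 11" and a=11 and dA="2373" and dB="1387/2" and dC="71" and dD="5/2"])
     (auto simp: field_simps power2_eq_square power3_eq_cube)

lemma QN6: "11 \<le> n \<Longrightarrow> 0 \<le> Qp (6, 23/128, 1/64, -(3/8), 1/4) n"
  by (rule Qp_gen[where t="real n - 11" and a=11 and dA="45" and dB="449/16" and dC="21/4" and dD="1/4"])
     (auto simp: field_simps power2_eq_square power3_eq_cube)

lemma QN8: "11 \<le> n \<Longrightarrow> 0 \<le> Qp (8, -(1/16), -(1/8), 0, 1/4) n"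
  by (rule Qp_gen[where t="real n - 11" and a=11 and dA="255/2" and dB="267/4" and dC="15/2" and dD="1/4"])
     (auto simp: field_simps power2_eq_square power3_eq_cube)

lemma QN10: "11 \<le> n \<Longrightarrow> 0 \<le> Qp (10, -(5/128), 3/64, 0, 0) n"
  by (rule Qp_gen[where t="real n - 11" and a=11 and dA="25/2" and dB="75/16" and dC="0" and dD="0"])
     (auto simp: field_simps power2_eq_square power3_eq_cube)

lemma N_Qp: "11 \<le> n \<Longrightarrow> e \<in> set LN \<Longrightarrow> 0 \<le> Qp e n"
  unfolding LN_def using QN0 QN2 QN4 QN6 QN8 QN10 by auto

lemma QD0: "6 \<le> n \<Longrightarrow> 0 \<le> Qp (0, 0, 0, 0, -(1/2)) n" by (simp add: Qp_def power_0_left)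

lemma QD2: "6 \<le> n \<Longrightarrow> 0 \<le> Qp (2, 3/64, -(3/32), -(3/4), 1/2) n"
  by (rule Qp_gen[where t="real n - 6" and a=6 and dA="105/8" and dB="161/8" and dC="6" and dD="1/2"])
     (auto simp: field_simps power2_eq_square power3_eq_cube)

lemma QD4: "6 \<le> n \<Longrightarrow> 0 \<le> Qp (4, 0, 0, 0, 1/2) n"
  by (rule Qp_gen[where t="real n - 6" and a=6 and dA="60" and dB="37" and dC="15/2" and dD="1/2"])
     (auto simp: field_simps power2_eq_square power3_eq_cube)

lemma QD6: "6 \<le> n \<Longrightarrow> 0 \<le> Qp (6, -(1/64), 3/32, 0, 0) n"
  by (rule Qp_gen[where t="real n - 6" and a=6 and dA="135/8" and dB="27/8" and dC="0" and dD="0"])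
     (auto simp: field_simps power2_eq_square power3_eq_cube)

lemma D_Qp: "6 \<le> n \<Longrightarrow> e \<in> set LD \<Longrightarrow> 0 \<le> Qp e n"
  unfolding LD_def using QD0 QD2 QD4 QD6 by auto

lemma coefN: "CL LN 0 = 0" "CL LN 1 = 0" "CL LN 2 = 0" "CL LN 3 = 0" "CL LN 4 = 0" "CL LN 5 = 0" "CL LN 6 = 0" "CL LN 7 = -16" "CL LN 8 = 0" "CL LN 9 = 3616/45" "CL LN 10 = 0" "CL LN 11 = 171488/945" "CL LN 12 = 0" "CL LN 13 = 2481856/14175" "CL LN 14 = 0" "CL LN 15 = 34940512/334125" "CL LN 16 = 0" "CL LN 17 = 9392214976/212837625" "CL LN 18 = 0" "CL LN 19 = 5413552576/383107725" "CL LN 20 = 0" "CL LN 21 = 55613316224/15471658125" "CL LN 22 = 0" "CL LN 23 = 16241315586784/21655164155625" "CL LN 24 = 0" "CL LN 25 = 156485582563136/1191034028559375" "CL LN 26 = 0" "CL LN 27 = 43633375042650688/2218896395206115625" "CL LN 28 = 0"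
  by (simp_all add: CL_def LN_def tc_def bc_def fact_numeral)

lemma coefD: "CL LD 0 = 0" "CL LD 1 = 0" "CL LD 2 = 0" "CL LD 3 = 0" "CL LD 4 = 0" "CL LD 5 = 16"
  by (simp_all add: CL_def LD_def tc_def bc_def fact_numeral)

lemma mapN: "map (CL LN) [0..<29] = [0, 0, 0, 0, 0, 0, 0, -16, 0, 3616/45, 0, 171488/945, 0, 2481856/14175, 0, 34940512/334125, 0, 9392214976/212837625, 0, 5413552576/383107725, 0, 55613316224/15471658125, 0, 16241315586784/21655164155625, 0, 156485582563136/1191034028559375, 0, 43633375042650688/2218896395206115625, 0]"
  using coefN by (simp add: upt_rec numeral_eq_Suc)

lemma CLN_nonneg: assumes "n \<noteq> 7" shows "0 \<le> CL LN n"
proof (cases "11 \<le> n")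
  case True
  show ?thesis by (rule CL_nonneg) (use True in \<open>auto intro: N_Qp\<close>)
next
  case False
  then have "n=0 \<or> n=1 \<or> n=2 \<or> n=3 \<or> n=4 \<or> n=5 \<or> n=6 \<or> n=8 \<or> n=9 \<or> n=10" using assms by presburger
  then show ?thesis using coefN by auto
qed

lemma CLN_small: "n < 7 \<Longrightarrow> CL LN n = 0"
proof -
  assume "n < 7"
  then have "n \<in> {0,1,2,3,4,5,6}" by auto
  then show ?thesis using coefN by auto
qed

lemma CLD_nonneg: "0 \<le> CL LD n"
proof (cases "6 \<le> n")
  case True
  show ?thesis by (rule CL_nonneg) (use True in \<open>auto intro: D_Qp\<close>)
next
  case False
  then have "n \<in> {0,1,2,3,4,5}" by auto
  then show ?thesis using coefD by auto
qed

lemma N_sums: "(\<lambda>n. CL LN n * k^n) sums Num k"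
  using FL_sums[of LN k] Num_FL[of k] by simp

lemma D_sums: "(\<lambda>n. CL LD n * k^n) sums D_den k"
  using FL_sums[of LD k] D_FL[of k] by simp

lemma D_pos: assumes "k > 0" shows "D_den k > 0"
proof -
  have "(\<lambda>n. if n \<in> {5::nat} then CL LD n * k^n else 0) sums (\<Sum>n\<in>{5}. CL LD n * k^n)"
    by (rule sums_If_finite_set) simp
  then have s1: "(\<lambda>n. if n \<in> {5::nat} then CL LD n * k^n else 0) sums (16 * k^5)"
    using coefD by simp
  have "16 * k^5 \<le> D_den k"
  proof (rule sums_le[OF _ s1 D_sums])
    fix n show "(if n \<in> {5::nat} then CL LD n * k^n else 0) \<le> CL LD n * k^n"
      using CLD_nonneg[of n] assms by auto
  qed
  moreover have "16 * k^5 > 0" using assms by simp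
  ultimately show ?thesis by linarith
qed

lemma N_mono: assumes "0 < k" "k \<le> K" shows "Num k * K^7 \<le> Num K * k^7"
proof -
  have s1: "(\<lambda>n. CL LN n * k^n * K^7) sums (Num k * K^7)" by (rule sums_mult2[OF N_sums])
  have s2: "(\<lambda>n. CL LN n * K^n * k^7) sums (Num K * k^7)" by (rule sums_mult2[OF N_sums])
  have s3: "(\<lambda>n. CL LN n * k^n * K^7 - CL LN n * K^n * k^7) sums (Num k * K^7 - Num K * k^7)"
    by (rule sums_diff[OF s1 s2])
  have "Num k * K^7 - Num K * k^7 \<le> 0"
  proof (rule sums_le[OF _ s3 sums_zero])
    fix n
    show "CL LN n * k^n * K^7 - CL LN n * K^n * k^7 \<le> 0"
    proof (cases "n < 7")
      case True then show ?thesis using CLN_small by simp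
    next
      case False
      then obtain j where j: "n = j + 7" by (metis add.commute le_Suc_ex not_less)
      have "k^j \<le> K^j" using assms by (intro power_mono) auto
      then have "k^j * (k^7 * K^7) \<le> K^j * (k^7 * K^7)"
        using assms by (intro mult_right_mono) auto
      then have le: "k^n * K^7 \<le> K^n * k^7" unfolding j power_add by (simp add: algebra_simps)
      show ?thesis
      proof (cases "n = 7")
        case True then show ?thesis by simp
      next
        case False
        then have c0: "0 \<le> CL LN n" by (rule CLN_nonneg)
        have "CL LN n * (k^n * K^7) \<le> CL LN n * (K^n * k^7)" by (rule mult_left_mono[OF le c0])
        then show ?thesis by (simp add: algebra_simps)
      qed
    qed
  qed
  then show ?thesis by simp
qed

lemma N_lower: assumes "0 \<le> x" shows "(\<Sum>n<29. CL LN n * x^n) \<le> Num x"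
proof -
  have s: "(\<lambda>n. if n \<in> {..<29::nat} then CL LN n * x^n else 0) sums (\<Sum>n\<in>{..<29}. CL LN n * x^n)"
    by (rule sums_If_finite_set) simp
  show ?thesis
  proof (rule sums_le[OF _ s N_sums])
    fix n show "(if n \<in> {..<29::nat} then CL LN n * x^n else 0) \<le> CL LN n * x^n"
      using CLN_nonneg[of n] assms by auto
  qed
qed

lemma N_upper: assumes "0 \<le> x" "x \<le> 1"
  shows "Num x \<le> (\<Sum>n<29. CL LN n * x^n) + x^29 * (Num 1 - (\<Sum>n<29. CL LN n))"
proof -
  have s1: "(\<lambda>n. CL LN n) sums Num 1" using N_sums[of 1] by simp
  have s2: "(\<lambda>n. CL LN n * x^n - x^29 * CL LN n) sums (Num x - x^29 * Num 1)"
    by (rule sums_diff[OF N_sums sums_mult[OF s1]])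
  have s3: "(\<lambda>n. if n \<in> {..<29::nat} then CL LN n * x^n - x^29 * CL LN n else 0)
      sums (\<Sum>n\<in>{..<29}. CL LN n * x^n - x^29 * CL LN n)"
    by (rule sums_If_finite_set) simp
  have "Num x - x^29 * Num 1 \<le> (\<Sum>n\<in>{..<29}. CL LN n * x^n - x^29 * CL LN n)"
  proof (rule sums_le[OF _ s2 s3])
    fix n
    show "CL LN n * x^n - x^29 * CL LN n \<le> (if n \<in> {..<29::nat} then CL LN n * x^n - x^29 * CL LN n else 0)"
    proof (cases "n < 29")
      case True then show ?thesis by simp
    next
      case False
      then have "x^n \<le> x^29" using assms by (intro power_decreasing) auto
      moreover have "0 \<le> CL LN n" using False by (intro CLN_nonneg) auto
      ultimately have "CL LN n * x^n \<le> CL LN n * x^29" by (rule mult_left_mono)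
      then show ?thesis using False by (simp add: algebra_simps)
    qed
  qed
  also have "\<dots> = (\<Sum>n<29. CL LN n * x^n) - x^29 * (\<Sum>n<29. CL LN n)"
    by (simp add: sum_subtractf sum_distrib_left)
  finally show ?thesis by (simp add: algebra_simps)
qed

lemma P1_lower: "-16 \<le> (\<Sum>n<29. CL LN n)"
proof -
  have "(\<Sum>n<29. CL LN n) = CL LN 7 + (\<Sum>n\<in>{..<29} - {7}. CL LN n)"
    by (rule sum.remove) auto
  moreover have "0 \<le> (\<Sum>n\<in>{..<29} - {7}. CL LN n)" by (intro sum_nonneg CLN_nonneg) auto
  ultimately show ?thesis using coefN by simp
qed

lemma Num1_upper: "Num 1 \<le> 10000"
proof -
  let ?s = "sinh (1::real)" and ?c = "cosh (1::real)"
  have s0: "0 \<le> ?s" by simp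
  have c0: "0 \<le> ?c" using cosh_real_pos[of 1] by linarith
  have "?s \<le> exp 1 / 2" by (simp add: sinh_def)
  then have s1: "?s \<le> 3/2" using exp_le by simp
  have neg1: "0 \<le> ?c*?s*(24*?s^4 + 40*?s^2 + 27)" using s0 c0 by simp
  have neg2: "0 \<le> ?c*?s^3*(1+?s^2)*(40*?s^4 + 56*?s^2 + 9)" using s0 c0 by simp
  have eqN: "Num 1 = (64*?s^8 + 144*?s^6 + 144*?s^4 + 94*?s^2 + 9) - ?c*?s*(24*?s^4 + 40*?s^2 + 27) + ?s^2*(1+?s^2)*(48*?s^6 + 40*?s^4 + 2*?s^2 + 27) - ?c*?s^3*(1+?s^2)*(40*?s^4 + 56*?s^2 + 9)"
    unfolding Num_def Let_def by (simp add: mult.assoc)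
  have "Num 1 \<le> (64*?s^8 + 144*?s^6 + 144*?s^4 + 94*?s^2 + 9) + ?s^2*(1+?s^2)*(48*?s^6 + 40*?s^4 + 2*?s^2 + 27)"
    using eqN neg1 neg2 by linarith
  also have "\<dots> = 48*?s^10 + 88*?s^8 + 42*?s^6 + 29*?s^4 + 27*?s^2 + 64*?s^8 + 144*?s^6 + 144*?s^4 + 94*?s^2 + 9"
    by (simp add: algebra_simps power_add[symmetric])
  also have "\<dots> \<le> 10000"
  proof -
    have "\<And>j::nat. ?s^j \<le> (3/2)^j" using s0 s1 by (intro power_mono) auto
    from this[of 10] this[of 8] this[of 6] this[of 4] this[of 2]
    have "?s^10 \<le> 59049/1024" "?s^8 \<le> 6561/256" "?s^6 \<le> 729/64" "?s^4 \<le> 81/16" "?s^2 \<le> 9/4"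
      by (simp_all add: power_divide)
    then show ?thesis by linarith
  qed
  finally show ?thesis .
qed

lemma hor_sum: "hor l x = (\<Sum>i<length l. l!i * x^i)"
proof (induction l)
  case Nil then show ?case by simp
next
  case (Cons a l)
  have "(\<Sum>i<length (a#l). (a#l)!i * x^i) = (\<Sum>i<Suc (length l). (a#l)!i * x^i)" by simp
  also have "\<dots> = (a#l)!0 * x^0 + (\<Sum>i<length l. (a#l)!(Suc i) * x^(Suc i))"
    by (rule sum.lessThan_Suc_shift)
  also have "\<dots> = a + x * (\<Sum>i<length l. l!i * x^i)"
    by (simp add: sum_distrib_left algebra_simps)
  finally show ?case using Cons by simp
qed

lemma hor_up: "hor l x \<le> U \<Longrightarrow> 0 \<le> x \<Longrightarrow> a + x*U \<le> U' \<Longrightarrow> hor (a#l) x \<le> U'"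
  by (smt (verit) mult_left_mono hor.simps(2))
lemma hor_lo: "hor l x \<ge> L \<Longrightarrow> 0 \<le> x \<Longrightarrow> L' \<le> a + x*L \<Longrightarrow> hor (a#l) x \<ge> L'"
  by (smt (verit) mult_left_mono hor.simps(2))

lemma P_hor: "(\<Sum>n<29. CL LN n * x^n) = hor (map (CL LN) [0..<29]) x"
  by (simp add: hor_sum)

lemma horU: "hor [0, 0, 0, 0, 0, 0, 0, -16, 0, 3616/45, 0, 171488/945, 0, 2481856/14175, 0, 34940512/334125, 0, 9392214976/212837625, 0, 5413552576/383107725, 0, 55613316224/15471658125, 0, 16241315586784/21655164155625, 0, 156485582563136/1191034028559375, 0, 43633375042650688/2218896395206115625, 0] (380337/1000000) \<le> -(144935928007682874081/2500000000000000000000000000)"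
proof -
  have "hor [] (380337/1000000) \<le> 0" by simp
  then have "hor [0] (380337/1000000) \<le> 0" by (rule hor_up) simp_all
  then have "hor [43633375042650688/2218896395206115625, 0] (380337/1000000) \<le> 19664449019305174814214467561/1000000000000000000000000000000" by (rule hor_up) simp_all
  then have "hor [0, 43633375042650688/2218896395206115625, 0] (380337/1000000) \<le> 7479117546655472273313887949/1000000000000000000000000000000" by (rule hor_up) simp_all
  then have "hor [156485582563136/1191034028559375, 0, 43633375042650688/2218896395206115625, 0] (380337/1000000) \<le> 134230908955543520799003594519/1000000000000000000000000000000" by (rule hor_up) simp_all
  then have "hor [0, 156485582563136/1191034028559375, 0, 43633375042650688/2218896395206115625, 0] (380337/1000000) \<le> 51052981219424556070130630129/1000000000000000000000000000000" by (rule hor_up) simp_all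
  then have "hor [16241315586784/21655164155625, 0, 156485582563136/1191034028559375, 0, 43633375042650688/2218896395206115625, 0] (380337/1000000) \<le> 3077658724319699683011451851/4000000000000000000000000000" by (rule hor_up) simp_all
  then have "hor [0, 16241315586784/21655164155625, 0, 156485582563136/1191034028559375, 0, 43633375042650688/2218896395206115625, 0] (380337/1000000) \<le> 36579608944736925573047705083/125000000000000000000000000000" by (rule hor_up) simp_all
  then have "hor [55613316224/15471658125, 0, 16241315586784/21655164155625, 0, 156485582563136/1191034028559375, 0, 43633375042650688/2218896395206115625, 0] (380337/1000000) \<le> 3705829139605349936649792034983/1000000000000000000000000000000" by (rule hor_up) simp_all
  then have "hor [0, 55613316224/15471658125, 0, 16241315586784/21655164155625, 0, 156485582563136/1191034028559375, 0, 43633375042650688/2218896395206115625, 0] (380337/1000000) \<le> 140946393747007997885557195321/100000000000000000000000000000" by (rule hor_up) simp_all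
  then have "hor [5413552576/383107725, 0, 55613316224/15471658125, 0, 16241315586784/21655164155625, 0, 156485582563136/1191034028559375, 0, 43633375042650688/2218896395206115625, 0] (380337/1000000) \<le> 14666698842103766884446291184159/1000000000000000000000000000000" by (rule hor_up) simp_all
  then have "hor [0, 5413552576/383107725, 0, 55613316224/15471658125, 0, 16241315586784/21655164155625, 0, 156485582563136/1191034028559375, 0, 43633375042650688/2218896395206115625, 0] (380337/1000000) \<le> 557828823750922038552964905011/100000000000000000000000000000" by (rule hor_up) simp_all
  then have "hor [9392214976/212837625, 0, 5413552576/383107725, 0, 55613316224/15471658125, 0, 16241315586784/21655164155625, 0, 156485582563136/1191034028559375, 0, 43633375042650688/2218896395206115625, 0] (380337/1000000) \<le> 1156254391284902495516102933029/25000000000000000000000000000" by (rule hor_up) simp_all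
  then have "hor [0, 9392214976/212837625, 0, 5413552576/383107725, 0, 55613316224/15471658125, 0, 16241315586784/21655164155625, 0, 156485582563136/1191034028559375, 0, 43633375042650688/2218896395206115625, 0] (380337/1000000) \<le> 17590653056725038417484321649579/1000000000000000000000000000000" by (rule hor_up) simp_all
  then have "hor [34940512/334125, 0, 9392214976/212837625, 0, 5413552576/383107725, 0, 55613316224/15471658125, 0, 16241315586784/21655164155625, 0, 156485582563136/1191034028559375, 0, 43633375042650688/2218896395206115625, 0] (380337/1000000) \<le> 111263550921699229889078575819967/1000000000000000000000000000000" by (rule hor_up) simp_all
  then have "hor [0, 34940512/334125, 0, 9392214976/212837625, 0, 5413552576/383107725, 0, 55613316224/15471658125, 0, 16241315586784/21655164155625, 0, 156485582563136/1191034028559375, 0, 43633375042650688/2218896395206115625, 0] (380337/1000000) \<le> 42317645166906319998322478291639/1000000000000000000000000000000" by (rule hor_up) simp_all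
  then have "hor [2481856/14175, 0, 34940512/334125, 0, 9392214976/212837625, 0, 5413552576/383107725, 0, 55613316224/15471658125, 0, 16241315586784/21655164155625, 0, 156485582563136/1191034028559375, 0, 43633375042650688/2218896395206115625, 0] (380337/1000000) \<le> 191181809243355349205568819459517/1000000000000000000000000000000" by (rule hor_up) simp_all
  then have "hor [0, 2481856/14175, 0, 34940512/334125, 0, 9392214976/212837625, 0, 5413552576/383107725, 0, 55613316224/15471658125, 0, 16241315586784/21655164155625, 0, 156485582563136/1191034028559375, 0, 43633375042650688/2218896395206115625, 0] (380337/1000000) \<le> 2908540631287601738031937123471/40000000000000000000000000000" by (rule hor_up) simp_all
  then have "hor [171488/945, 0, 2481856/14175, 0, 34940512/334125, 0, 9392214976/212837625, 0, 5413552576/383107725, 0, 55613316224/15471658125, 0, 16241315586784/21655164155625, 0, 156485582563136/1191034028559375, 0, 43633375042650688/2218896395206115625, 0] (380337/1000000) \<le> 209124423520833883339015104812023/1000000000000000000000000000000" by (rule hor_up) simp_all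
  then have "hor [0, 171488/945, 0, 2481856/14175, 0, 34940512/334125, 0, 9392214976/212837625, 0, 5413552576/383107725, 0, 55613316224/15471658125, 0, 16241315586784/21655164155625, 0, 156485582563136/1191034028559375, 0, 43633375042650688/2218896395206115625, 0] (380337/1000000) \<le> 79537755868643396687510987918891/1000000000000000000000000000000" by (rule hor_up) simp_all
  then have "hor [3616/45, 0, 171488/945, 0, 2481856/14175, 0, 34940512/334125, 0, 9392214976/212837625, 0, 5413552576/383107725, 0, 55613316224/15471658125, 0, 16241315586784/21655164155625, 0, 156485582563136/1191034028559375, 0, 43633375042650688/2218896395206115625, 0] (380337/1000000) \<le> 110606707009367779121493422167663/1000000000000000000000000000000" by (rule hor_up) simp_all
  then have "hor [0, 3616/45, 0, 171488/945, 0, 2481856/14175, 0, 34940512/334125, 0, 9392214976/212837625, 0, 5413552576/383107725, 0, 55613316224/15471658125, 0, 16241315586784/21655164155625, 0, 156485582563136/1191034028559375, 0, 43633375042650688/2218896395206115625, 0] (380337/1000000) \<le> 42067823123821913007731443706983/1000000000000000000000000000000" by (rule hor_up) simp_all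
  then have "hor [-16, 0, 3616/45, 0, 171488/945, 0, 2481856/14175, 0, 34940512/334125, 0, 9392214976/212837625, 0, 5413552576/383107725, 0, 55613316224/15471658125, 0, 16241315586784/21655164155625, 0, 156485582563136/1191034028559375, 0, 43633375042650688/2218896395206115625, 0] (380337/1000000) \<le> -(50356554945072378445894817/1000000000000000000000000000000)" by (rule hor_up) simp_all
  then have "hor [0, -16, 0, 3616/45, 0, 171488/945, 0, 2481856/14175, 0, 34940512/334125, 0, 9392214976/212837625, 0, 5413552576/383107725, 0, 55613316224/15471658125, 0, 16241315586784/21655164155625, 0, 156485582563136/1191034028559375, 0, 43633375042650688/2218896395206115625, 0] (380337/1000000) \<le> -(19152461038143993200976297/1000000000000000000000000000000)" by (rule hor_up) simp_all
  then have "hor [0, 0, -16, 0, 3616/45, 0, 171488/945, 0, 2481856/14175, 0, 34940512/334125, 0, 9392214976/212837625, 0, 5413552576/383107725, 0, 55613316224/15471658125, 0, 16241315586784/21655164155625, 0, 156485582563136/1191034028559375, 0, 43633375042650688/2218896395206115625, 0] (380337/1000000) \<le> -(7284389573864571942079721/1000000000000000000000000000000)" by (rule hor_up) simp_all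
  then have "hor [0, 0, 0, -16, 0, 3616/45, 0, 171488/945, 0, 2481856/14175, 0, 34940512/334125, 0, 9392214976/212837625, 0, 5413552576/383107725, 0, 55613316224/15471658125, 0, 16241315586784/21655164155625, 0, 156485582563136/1191034028559375, 0, 43633375042650688/2218896395206115625, 0] (380337/1000000) \<le> -(1385261438677464849367387/500000000000000000000000000000)" by (rule hor_up) simp_all
  then have "hor [0, 0, 0, 0, -16, 0, 3616/45, 0, 171488/945, 0, 2481856/14175, 0, 34940512/334125, 0, 9392214976/212837625, 0, 5413552576/383107725, 0, 55613316224/15471658125, 0, 16241315586784/21655164155625, 0, 156485582563136/1191034028559375, 0, 43633375042650688/2218896395206115625, 0] (380337/1000000) \<le> -(1053732359604541896827687/1000000000000000000000000000000)" by (rule hor_up) simp_all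
  then have "hor [0, 0, 0, 0, 0, -16, 0, 3616/45, 0, 171488/945, 0, 2481856/14175, 0, 34940512/334125, 0, 9392214976/212837625, 0, 5413552576/383107725, 0, 55613316224/15471658125, 0, 16241315586784/21655164155625, 0, 156485582563136/1191034028559375, 0, 43633375042650688/2218896395206115625, 0] (380337/1000000) \<le> -(400773404454912651413751/1000000000000000000000000000000)" by (rule hor_up) simp_all
  then have "hor [0, 0, 0, 0, 0, 0, -16, 0, 3616/45, 0, 171488/945, 0, 2481856/14175, 0, 34940512/334125, 0, 9392214976/212837625, 0, 5413552576/383107725, 0, 55613316224/15471658125, 0, 16241315586784/21655164155625, 0, 156485582563136/1191034028559375, 0, 43633375042650688/2218896395206115625, 0] (380337/1000000) \<le> -(152428954330168113100751/1000000000000000000000000000000)" by (rule hor_up) simp_all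
  then have "hor [0, 0, 0, 0, 0, 0, 0, -16, 0, 3616/45, 0, 171488/945, 0, 2481856/14175, 0, 34940512/334125, 0, 9392214976/212837625, 0, 5413552576/383107725, 0, 55613316224/15471658125, 0, 16241315586784/21655164155625, 0, 156485582563136/1191034028559375, 0, 43633375042650688/2218896395206115625, 0] (380337/1000000) \<le> -(144935928007682874081/2500000000000000000000000000)" by (rule hor_up) simp_all
  then show ?thesis .
qed

lemma horL: "hor [0, 0, 0, 0, 0, 0, 0, -16, 0, 3616/45, 0, 171488/945, 0, 2481856/14175, 0, 34940512/334125, 0, 9392214976/212837625, 0, 5413552576/383107725, 0, 55613316224/15471658125, 0, 16241315586784/21655164155625, 0, 156485582563136/1191034028559375, 0, 43633375042650688/2218896395206115625, 0] (190169/500000) \<ge> 34600044086242100542577/500000000000000000000000000000"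
proof -
  have "hor [] (190169/500000) \<ge> 0" by simp
  then have "hor [0] (190169/500000) \<ge> 0" by (rule hor_lo) simp_all
  then have "hor [43633375042650688/2218896395206115625, 0] (190169/500000) \<ge> 491611225482629370355361689/25000000000000000000000000000" by (rule hor_lo) simp_all
  then have "hor [0, 43633375042650688/2218896395206115625, 0] (190169/500000) \<ge> 3739568605552245789244351081/500000000000000000000000000000" by (rule hor_lo) simp_all
  then have "hor [156485582563136/1191034028559375, 0, 43633375042650688/2218896395206115625, 0] (190169/500000) \<ge> 1677886548922478481987093079/12500000000000000000000000000" by (rule hor_lo) simp_all
  then have "hor [0, 156485582563136/1191034028559375, 0, 43633375042650688/2218896395206115625, 0] (190169/500000) \<ge> 25526560569763104835280280299/500000000000000000000000000000" by (rule hor_lo) simp_all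
  then have "hor [16241315586784/21655164155625, 0, 156485582563136/1191034028559375, 0, 43633375042650688/2218896395206115625, 0] (190169/500000) \<ge> 384707392674918881452249675887/500000000000000000000000000000" by (rule hor_lo) simp_all
  then have "hor [0, 16241315586784/21655164155625, 0, 156485582563136/1191034028559375, 0, 43633375042650688/2218896395206115625, 0] (190169/500000) \<ge> 58527536126077319013514294891/200000000000000000000000000000" by (rule hor_lo) simp_all
  then have "hor [55613316224/15471658125, 0, 16241315586784/21655164155625, 0, 156485582563136/1191034028559375, 0, 43633375042650688/2218896395206115625, 0] (190169/500000) \<ge> 28951794843462770694931188081/7812500000000000000000000000" by (rule hor_lo) simp_all
  then have "hor [0, 55613316224/15471658125, 0, 16241315586784/21655164155625, 0, 156485582563136/1191034028559375, 0, 43633375042650688/2218896395206115625, 0] (190169/500000) \<ge> 70473393581906836995639924559/50000000000000000000000000000" by (rule hor_lo) simp_all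
  then have "hor [5413552576/383107725, 0, 55613316224/15471658125, 0, 16241315586784/21655164155625, 0, 156485582563136/1191034028559375, 0, 43633375042650688/2218896395206115625, 0] (190169/500000) \<ge> 1833337718485164340864156683341/125000000000000000000000000000" by (rule hor_lo) simp_all
  then have "hor [0, 5413552576/383107725, 0, 55613316224/15471658125, 0, 16241315586784/21655164155625, 0, 156485582563136/1191034028559375, 0, 43633375042650688/2218896395206115625, 0] (190169/500000) \<ge> 1394576002346420870151183249257/250000000000000000000000000000" by (rule hor_lo) simp_all
  then have "hor [9392214976/212837625, 0, 5413552576/383107725, 0, 55613316224/15471658125, 0, 16241315586784/21655164155625, 0, 156485582563136/1191034028559375, 0, 43633375042650688/2218896395206115625, 0] (190169/500000) \<ge> 46250187228328287550519170129011/1000000000000000000000000000000" by (rule hor_lo) simp_all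
  then have "hor [0, 9392214976/212837625, 0, 5413552576/383107725, 0, 55613316224/15471658125, 0, 16241315586784/21655164155625, 0, 156485582563136/1191034028559375, 0, 43633375042650688/2218896395206115625, 0] (190169/500000) \<ge> 17590703710047924230389360128527/1000000000000000000000000000000" by (rule hor_lo) simp_all
  then have "hor [34940512/334125, 0, 9392214976/212837625, 0, 5413552576/383107725, 0, 55613316224/15471658125, 0, 16241315586784/21655164155625, 0, 156485582563136/1191034028559375, 0, 43633375042650688/2218896395206115625, 0] (190169/500000) \<ge> 111263587777735806358425669829293/1000000000000000000000000000000" by (rule hor_lo) simp_all
  then have "hor [0, 34940512/334125, 0, 9392214976/212837625, 0, 5413552576/383107725, 0, 55613316224/15471658125, 0, 16241315586784/21655164155625, 0, 156485582563136/1191034028559375, 0, 43633375042650688/2218896395206115625, 0] (190169/500000) \<ge> 42317770448208481118750902411533/1000000000000000000000000000000" by (rule hor_lo) simp_all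
  then have "hor [2481856/14175, 0, 34940512/334125, 0, 9392214976/212837625, 0, 5413552576/383107725, 0, 55613316224/15471658125, 0, 16241315586784/21655164155625, 0, 156485582563136/1191034028559375, 0, 43633375042650688/2218896395206115625, 0] (190169/500000) \<ge> 191181899210240417468110323754907/1000000000000000000000000000000" by (rule hor_lo) simp_all
  then have "hor [0, 2481856/14175, 0, 34940512/334125, 0, 9392214976/212837625, 0, 5413552576/383107725, 0, 55613316224/15471658125, 0, 16241315586784/21655164155625, 0, 156485582563136/1191034028559375, 0, 43633375042650688/2218896395206115625, 0] (190169/500000) \<ge> 72713741181824419898986144316293/1000000000000000000000000000000" by (rule hor_lo) simp_all
  then have "hor [171488/945, 0, 2481856/14175, 0, 34940512/334125, 0, 9392214976/212837625, 0, 5413552576/383107725, 0, 55613316224/15471658125, 0, 16241315586784/21655164155625, 0, 156485582563136/1191034028559375, 0, 43633375042650688/2218896395206115625, 0] (190169/500000) \<ge> 209124581962395804998609375225753/1000000000000000000000000000000" by (rule hor_lo) simp_all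
  then have "hor [0, 171488/945, 0, 2481856/14175, 0, 34940512/334125, 0, 9392214976/212837625, 0, 5413552576/383107725, 0, 55613316224/15471658125, 0, 16241315586784/21655164155625, 0, 156485582563136/1191034028559375, 0, 43633375042650688/2218896395206115625, 0] (190169/500000) \<ge> 19884506313603423920390273138653/250000000000000000000000000000" by (rule hor_lo) simp_all
  then have "hor [3616/45, 0, 171488/945, 0, 2481856/14175, 0, 34940512/334125, 0, 9392214976/212837625, 0, 5413552576/383107725, 0, 55613316224/15471658125, 0, 16241315586784/21655164155625, 0, 156485582563136/1191034028559375, 0, 43633375042650688/2218896395206115625, 0] (190169/500000) \<ge> 110606889004768751743689138375591/1000000000000000000000000000000" by (rule hor_lo) simp_all
  then have "hor [0, 3616/45, 0, 171488/945, 0, 2481856/14175, 0, 34940512/334125, 0, 9392214976/212837625, 0, 5413552576/383107725, 0, 55613316224/15471658125, 0, 16241315586784/21655164155625, 0, 156485582563136/1191034028559375, 0, 43633375042650688/2218896395206115625, 0] (190169/500000) \<ge> 8413600590059147500138247902299/200000000000000000000000000000" by (rule hor_lo) simp_all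
  then have "hor [-16, 0, 3616/45, 0, 171488/945, 0, 2481856/14175, 0, 34940512/334125, 0, 9392214976/212837625, 0, 5413552576/383107725, 0, 55613316224/15471658125, 0, 16241315586784/21655164155625, 0, 156485582563136/1191034028559375, 0, 43633375042650688/2218896395206115625, 0] (190169/500000) \<ge> 30053054790104768952326661/500000000000000000000000000000" by (rule hor_lo) simp_all
  then have "hor [0, -16, 0, 3616/45, 0, 171488/945, 0, 2481856/14175, 0, 34940512/334125, 0, 9392214976/212837625, 0, 5413552576/383107725, 0, 55613316224/15471658125, 0, 16241315586784/21655164155625, 0, 156485582563136/1191034028559375, 0, 43633375042650688/2218896395206115625, 0] (190169/500000) \<ge> 4572127501103547045516007/200000000000000000000000000000" by (rule hor_lo) simp_all
  then have "hor [0, 0, -16, 0, 3616/45, 0, 171488/945, 0, 2481856/14175, 0, 34940512/334125, 0, 9392214976/212837625, 0, 5413552576/383107725, 0, 55613316224/15471658125, 0, 16241315586784/21655164155625, 0, 156485582563136/1191034028559375, 0, 43633375042650688/2218896395206115625, 0] (190169/500000) \<ge> 1738953829514720876197467/200000000000000000000000000000" by (rule hor_lo) simp_all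
  then have "hor [0, 0, 0, -16, 0, 3616/45, 0, 171488/945, 0, 2481856/14175, 0, 34940512/334125, 0, 9392214976/212837625, 0, 5413552576/383107725, 0, 55613316224/15471658125, 0, 16241315586784/21655164155625, 0, 156485582563136/1191034028559375, 0, 43633375042650688/2218896395206115625, 0] (190169/500000) \<ge> 3306951108049849543055961/1000000000000000000000000000000" by (rule hor_lo) simp_all
  then have "hor [0, 0, 0, 0, -16, 0, 3616/45, 0, 171488/945, 0, 2481856/14175, 0, 34940512/334125, 0, 9392214976/212837625, 0, 5413552576/383107725, 0, 55613316224/15471658125, 0, 16241315586784/21655164155625, 0, 156485582563136/1191034028559375, 0, 43633375042650688/2218896395206115625, 0] (190169/500000) \<ge> 628879585266731837753409/500000000000000000000000000000" by (rule hor_lo) simp_all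
  then have "hor [0, 0, 0, 0, 0, -16, 0, 3616/45, 0, 171488/945, 0, 2481856/14175, 0, 34940512/334125, 0, 9392214976/212837625, 0, 5413552576/383107725, 0, 55613316224/15471658125, 0, 16241315586784/21655164155625, 0, 156485582563136/1191034028559375, 0, 43633375042650688/2218896395206115625, 0] (190169/500000) \<ge> 3737293807830910214179/7812500000000000000000000000" by (rule hor_lo) simp_all
  then have "hor [0, 0, 0, 0, 0, 0, -16, 0, 3616/45, 0, 171488/945, 0, 2481856/14175, 0, 34940512/334125, 0, 9392214976/212837625, 0, 5413552576/383107725, 0, 55613316224/15471658125, 0, 16241315586784/21655164155625, 0, 156485582563136/1191034028559375, 0, 43633375042650688/2218896395206115625, 0] (190169/500000) \<ge> 45485915273049367329293/250000000000000000000000000000" by (rule hor_lo) simp_all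
  then have "hor [0, 0, 0, 0, 0, 0, 0, -16, 0, 3616/45, 0, 171488/945, 0, 2481856/14175, 0, 34940512/334125, 0, 9392214976/212837625, 0, 5413552576/383107725, 0, 55613316224/15471658125, 0, 16241315586784/21655164155625, 0, 156485582563136/1191034028559375, 0, 43633375042650688/2218896395206115625, 0] (190169/500000) \<ge> 34600044086242100542577/500000000000000000000000000000" by (rule hor_lo) simp_all
  then show ?thesis .
qed

lemma Num_k1: "Num (380337/1000000) < 0"
proof -
  let ?x = "380337/1000000 :: real"
  have P: "(\<Sum>n<29. CL LN n * ?x^n) \<le> -(144935928007682874081/2500000000000000000000000000)"
    unfolding P_hor mapN by (rule horU)
  have pw: "?x^29 \<le> (381/1000)^29" by (rule power_mono) auto
  have A: "Num 1 - (\<Sum>n<29. CL LN n) \<le> 10016" using Num1_upper P1_lower by linarith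
  have x0: "0 \<le> ?x^29" by simp
  have "?x^29 * (Num 1 - (\<Sum>n<29. CL LN n)) \<le> ?x^29 * 10016" by (rule mult_left_mono[OF A x0])
  also have "\<dots> \<le> (381/1000)^29 * 10016" by (rule mult_right_mono[OF pw]) simp
  also have "\<dots> \<le> 8/1000000000" by (simp add: power_divide)
  finally have T: "?x^29 * (Num 1 - (\<Sum>n<29. CL LN n)) \<le> 8/1000000000" .
  have "Num ?x \<le> (\<Sum>n<29. CL LN n * ?x^n) + ?x^29 * (Num 1 - (\<Sum>n<29. CL LN n))"
    by (rule N_upper) auto
  then show ?thesis using P T by linarith
qed

lemma Num_k0: "Num (380338/1000000) > 0"
proof -
  let ?x = "380338/1000000 :: real"
  have P: "(\<Sum>n<29. CL LN n * ?x^n) \<ge> 34600044086242100542577/500000000000000000000000000000"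
    unfolding P_hor mapN using horL by simp
  have "(\<Sum>n<29. CL LN n * ?x^n) \<le> Num ?x" by (rule N_lower) simp
  then show ?thesis using P by linarith
qed

theorem lemma4p11:
  fixes k :: real
  assumes "k > 0"
    and "k \<notin> {0.380337<..<0.380338}"
  shows "Gamma0 k \<noteq> 0"
proof -
  have N: "Num k \<noteq> 0"
  proof (cases "k \<le> 380337/1000000")
    case True
    have "Num k * (380337/1000000)^7 \<le> Num (380337/1000000) * k^7"
      by (rule N_mono) (use assms True in auto)
    moreover have "Num (380337/1000000) * k^7 < 0"
      using Num_k1 assms(1) by (simp add: mult_neg_pos)
    ultimately have "Num k * (380337/1000000)^7 < 0" by linarith
    then show ?thesis by auto
  next
    case False
    then have k0: "380338/1000000 \<le> k" using assms(2) by auto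
    have "Num (380338/1000000) * k^7 \<le> Num k * (380338/1000000)^7"
      by (rule N_mono) (use k0 in auto)
    moreover have "Num (380338/1000000) * k^7 > 0"
      using Num_k0 assms(1) by simp
    ultimately have "Num k * (380338/1000000)^7 > 0" by linarith
    then show ?thesis by auto
  qed
  have "k^3 / (8*cosh k*sinh k*D_den k) \<noteq> 0"
    using assms(1) D_pos[OF assms(1)] cosh_real_pos[of k] by simp
  then show ?thesis unfolding Gamma0_Num using N by simp
qed

end
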